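(* Assume the genus-two setting described in the context (so $N=1$), and let $\alpha$ be one of the branchpoints $\alpha_0,\dots,\alpha_5$, regarded as an independent complex variable (all other branchpoints, the function $f$ and the contours being held fixed). Assume that the modulation equation $K(\alpha)=0$ holds at this branchpoint. Then, for $z$ inside the loop $\hat\gamma$ but outside the loops $\hat\gamma_m$ and $\hat\gamma_c$, \[ \frac{\partial K(z)}{\partial \alpha}=\frac{h(z)}{R(z)}\left[\frac{D}{2(z-\alpha)}+\frac{\partial D}{\partial \alpha}\right]. \]
   Context: Let $\alpha_0,\alpha_2,\alpha_4$ be distinct points in the open upper half-plane and $\alpha_1=\bar\alpha_0$, $\alpha_3=\bar\alpha_2$, $\alpha_5=\bar\alpha_4$. Let $R(z)=\big[\prod_{i=0}^{5}(z-\alpha_i)\big]^{1/2}$, with branchcuts along the main arcs: $\gamma_{m,0}$ (oriented from $\alpha_1$ to $\alpha_0$), $\gamma_m^+$ (from $\alpha_2$ to $\alpha_4$) and $\gamma_m^-$ (from $\alpha_5$ to $\alpha_3$); set $\gamma_m=\gamma_m^+\cup\gamma_m^-$. The complementary arcs are $\gamma_c^+$ (from $\alpha_0$ to $\alpha_2$) and $\gamma_c^-$ (from $\alpha_3$ to $\alpha_1$), $\gamma_c=\gamma_c^+\cup\gamma_c^-$; $\gamma$ is the union of all main and complementary arcs with these orientations. The function $f(z)$ is analytic in the upper half-plane except for finitely many logarithmic branchcuts and isolated singularities (none on the main arcs), and is extended to the lower half-plane by Schwarz reflection. Contours: $\hat\gamma$ is a loop around $\gamma$; $\hat\gamma_m$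 consists of loops around the arcs of $\gamma_m$; $\hat\gamma_c$ consists of two oppositely oriented arcs around $\gamma_c$ (so that integrals over arcs of $1/R_+$ become half of the loop integrals); all are contractible onto their arcs. Define \[ D=\det\begin{pmatrix}\oint_{\hat\gamma_m}\frac{d\zeta}{R(\zeta)}&\oint_{\hat\gamma_m}\frac{\zeta\,d\zeta}{R(\zeta)}\\ \oint_{\hat\gamma_c}\frac{d\zeta}{R(\zeta)}&\oint_{\hat\gamma_c}\frac{\zeta\,d\zeta}{R(\zeta)}\end{pmatrix},\quad K(z)=\frac{1}{2\pi i}\det\begin{pmatrix}\oint_{\hat\gamma_m}\frac{d\zeta}{R(\zeta)}&\oint_{\hat\gamma_m}\frac{\zeta\,d\zeta}{R(\zeta)}&\oint_{\hat\gamma_m}\frac{d\zeta}{(\zeta-z)R(\zeta)}\\ \oint_{\hat\gamma_c}\frac{d\zeta}{R(\zeta)}&\oint_{\hat\gamma_c}\frac{\zeta\,d\zeta}{R(\zeta)}&\oint_{\hat\gamma_c}\frac{d\zeta}{(\zeta-z)R(\zeta)}\\ \oint_{\hat\gamma}\frac{f(\zeta)d\zeta}{R(\zeta)}&\oint_{\hat\gamma}\frac{\zeta f(\zeta)d\zeta}{R(\zeta)}&\oint_{\hat\gamma}\frac{f(\zeta)d\zeta}{(\zeta-z)R(\zeta)}\end{pmatrix}. \] ($D\neq0$ for distinct branchpoints.) Let the constants $W,\Omega$ be determined by the linear equations $\oint_{\hat\gamma}\frac{\zeta^k f(\zeta)}{R(\zeta)}d\zeta+W\oint_{\hat\gamma_m}\frac{\zeta^k}{R(\zeta)}d\zeta+\Omega\oint_{\hat\gamma_c}\frac{\zeta^k}{R(\zeta)}d\zeta=0$,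 $k=0,1$, and for $z$ inside $\hat\gamma$ but outside $\hat\gamma_m,\hat\gamma_c$ let \[ h(z)=\frac{R(z)}{2\pi i}\Big[\oint_{\hat\gamma}\frac{f(\zeta)d\zeta}{(\zeta-z)R(\zeta)}+\oint_{\hat\gamma_m}\frac{W\,d\zeta}{(\zeta-z)R(\zeta)}+\oint_{\hat\gamma_c}\frac{\Omega\,d\zeta}{(\zeta-z)R(\zeta)}\Big] \] (equivalently $h=2g-f$ where $g$ solves the scalar RHP $g_++g_-=f+W_j$ on main arcs, $W_0=0$, $g_+-g_-=\Omega$ on complementary arcs, $g$ analytic at $\infty$). One has $h(z)=R(z)K(z)/D$. The modulation equation at a branchpoint $\alpha_{2j}$ is $K(\alpha_{2j})=0$, where $\alpha_{2j}$ is taken inside the loops around the arcs adjacent to it but outside all other loops. *)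

theory Defs
  imports "HOL-Complex_Analysis.Complex_Analysis"
begin

text \<open>Branchpoints alpha_0..alpha_5 are al 0 .. al 5.  The branchpoint with index j is
  replaced by the free complex variable a; all others are kept fixed.\<close>
definition brpt :: "(nat \<Rightarrow> complex) \<Rightarrow> nat \<Rightarrow> complex \<Rightarrow> nat \<Rightarrow> complex" where
  "brpt al j a k = (if k = j then a else al k)"

definition Ppoly :: "(nat \<Rightarrow> complex) \<Rightarrow> nat \<Rightarrow> complex \<Rightarrow> complex \<Rightarrow> complex" where
  "Ppoly al j a \<zeta> = (\<Prod>k<6. (\<zeta> - brpt al j a k))"

text \<open>Integral over a contour consisting of two closed paths (the two loops of
  hat-gamma_m, resp. the two closed contours of hat-gamma_c).\<close>
definition cint2 :: "(real \<Rightarrow> complex) \<Rightarrow> (real \<Rightarrow> complex) \<Rightarrow> (complex \<Rightarrow> complex) \<Rightarrow> complex" where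
  "cint2 p q g = contour_integral p g + contour_integral q g"

definition det3 :: "complex \<Rightarrow> complex \<Rightarrow> complex \<Rightarrow> complex \<Rightarrow> complex \<Rightarrow> complex
    \<Rightarrow> complex \<Rightarrow> complex \<Rightarrow> complex \<Rightarrow> complex" where
  "det3 a11 a12 a13 a21 a22 a23 a31 a32 a33 =
     a11 * (a22 * a33 - a23 * a32) - a12 * (a21 * a33 - a23 * a31) + a13 * (a21 * a32 - a22 * a31)"

text \<open>D, K, h for given branches: R is the branch of the square root used on the
  loops hat-gamma and hat-gamma_m (the sheet with cuts on the main arcs), Rc is the
  branch of the square root obtained by continuation along the closed contours hat-gamma_c
  (which cross the main-arc cuts, i.e. change sheet).\<close>
definition Dfun :: "(complex \<Rightarrow> complex) \<Rightarrow> (complex \<Rightarrow> complex) \<Rightarrow> (real \<Rightarrow> complex) \<Rightarrow> (real \<Rightarrow> complex)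
    \<Rightarrow> (real \<Rightarrow> complex) \<Rightarrow> (real \<Rightarrow> complex) \<Rightarrow> complex" where
  "Dfun R Rc gmp gmm gcp gcm =
     cint2 gmp gmm (\<lambda>\<zeta>. 1 / R \<zeta>) * cint2 gcp gcm (\<lambda>\<zeta>. \<zeta> / Rc \<zeta>)
   - cint2 gmp gmm (\<lambda>\<zeta>. \<zeta> / R \<zeta>) * cint2 gcp gcm (\<lambda>\<zeta>. 1 / Rc \<zeta>)"

definition Kfun :: "(complex \<Rightarrow> complex) \<Rightarrow> (complex \<Rightarrow> complex) \<Rightarrow> (complex \<Rightarrow> complex) \<Rightarrow> (real \<Rightarrow> complex)
    \<Rightarrow> (real \<Rightarrow> complex) \<Rightarrow> (real \<Rightarrow> complex) \<Rightarrow> (real \<Rightarrow> complex) \<Rightarrow> (real \<Rightarrow> complex)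
    \<Rightarrow> complex \<Rightarrow> complex" where
  "Kfun R Rc f gh gmp gmm gcp gcm z = 1 / (2 * pi * \<i>) * det3
     (cint2 gmp gmm (\<lambda>\<zeta>. 1 / R \<zeta>)) (cint2 gmp gmm (\<lambda>\<zeta>. \<zeta> / R \<zeta>))
       (cint2 gmp gmm (\<lambda>\<zeta>. 1 / ((\<zeta> - z) * R \<zeta>)))
     (cint2 gcp gcm (\<lambda>\<zeta>. 1 / Rc \<zeta>)) (cint2 gcp gcm (\<lambda>\<zeta>. \<zeta> / Rc \<zeta>))
       (cint2 gcp gcm (\<lambda>\<zeta>. 1 / ((\<zeta> - z) * Rc \<zeta>)))
     (contour_integral gh (\<lambda>\<zeta>. f \<zeta> / R \<zeta>)) (contour_integral gh (\<lambda>\<zeta>. \<zeta> * f \<zeta> / R \<zeta>))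
       (contour_integral gh (\<lambda>\<zeta>. f \<zeta> / ((\<zeta> - z) * R \<zeta>)))"

definition hfun :: "(complex \<Rightarrow> complex) \<Rightarrow> (complex \<Rightarrow> complex) \<Rightarrow> (complex \<Rightarrow> complex) \<Rightarrow> (real \<Rightarrow> complex)
    \<Rightarrow> (real \<Rightarrow> complex) \<Rightarrow> (real \<Rightarrow> complex) \<Rightarrow> (real \<Rightarrow> complex) \<Rightarrow> (real \<Rightarrow> complex)
    \<Rightarrow> complex \<Rightarrow> complex \<Rightarrow> complex \<Rightarrow> complex" where
  "hfun R Rc f gh gmp gmm gcp gcm W \<Omega> z = R z / (2 * pi * \<i>) *
     (contour_integral gh (\<lambda>\<zeta>. f \<zeta> / ((\<zeta> - z) * R \<zeta>))
      + cint2 gmp gmm (\<lambda>\<zeta>. W / ((\<zeta> - z) * R \<zeta>))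
      + cint2 gcp gcm (\<lambda>\<zeta>. \<Omega> / ((\<zeta> - z) * Rc \<zeta>)))"

end

theory Submission
  imports Defs
begin

lemma sbound:
  fixes s u :: complex
  assumes su: "s^2 = 1 - u" and re: "0 \<le> Re s" and un: "norm u \<le> 1/2"
  shows "norm (1/s - 1 - u/2) \<le> 4 * (norm u)^2"
proof -
  have f1: "(s - 1)*(s+1) = -u" using su by (simp add: algebra_simps power2_eq_square)
  have n1: "norm (s+1) \<ge> 1"
    using abs_Re_le_cmod[of "s+1"] re by simp
  have "norm (s-1) * norm (s+1) = norm u" using f1 by (metis norm_minus_cancel norm_mult)
  hence n2: "norm (s-1) \<le> norm u" using n1
    by (metis mult_le_cancel_left1 norm_ge_zero order.trans order_refl mult_left_mono mult.right_neutral)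
  have "norm (1::complex) \<le> norm s + norm (1 - s)" by (metis add.commute diff_add_cancel norm_triangle_ineq)
  hence n3: "norm s \<ge> 1/2" using n2 un by (simp add: norm_minus_commute)
  have sz: "s \<noteq> 0" using n3 by auto
  have n4: "norm (s+2) \<le> 7/2"
  proof -
    have "norm (s+2) = norm ((s-1) + 3)" by (simp add: algebra_simps)
    also have "\<dots> \<le> norm (s-1) + 3" using norm_triangle_ineq[of "s-1" 3] by simp
    finally show ?thesis using n2 un by simp
  qed
  have eq: "1/s - 1 - u/2 = (s - 1)^2 * (s + 2) / (2 * s)"
  proof -
    have "u = 1 - s * s" using su by (simp add: power2_eq_square)
    hence "u = 1 - s * s" .
    have "1 / s - 1 - (1 - s * s) / 2 = (s - 1)^2 * (s + 2) / (2 * s)"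
      using sz by (simp add: divide_simps power2_eq_square) (simp add: algebra_simps)
    then show ?thesis using \<open>u = 1 - s * s\<close> by simp
  qed
  have "norm (1/s - 1 - u/2) = (norm (s-1))^2 * norm (s+2) / (2 * norm s)"
    by (simp add: eq norm_mult norm_divide norm_power)
  also have "\<dots> \<le> (norm u)^2 * (7/2) / (2 * (1/2))"
  proof (rule frac_le)
    show "(norm (s-1))^2 * norm (s+2) \<le> (norm u)^2 * (7/2)"
      using n2 n4 by (intro mult_mono power_mono) auto
  qed (use n3 in auto)
  finally have "norm (1/s - 1 - u/2) \<le> (norm u)^2 * (7/2)" by simp
  moreover have "(norm u)^2 * (7/2) \<le> 4 * (norm u)^2" by simp
  ultimately show ?thesis by linarith
qed

lemma w_notin:
  fixes a a0 \<zeta> :: complex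
  assumes "norm (a - a0) < r" "r \<le> norm (\<zeta> - a0)"
  shows "(\<zeta> - a) / (\<zeta> - a0) \<notin> \<real>\<^sub>\<le>\<^sub>0"
proof -
  have nz: "\<zeta> - a0 \<noteq> 0" using assms norm_ge_zero[of "a - a0"] by (metis diff_self dual_order.trans norm_zero not_le)
  have eq: "(\<zeta> - a) / (\<zeta> - a0) = 1 - (a - a0) / (\<zeta> - a0)"
    using nz by (simp add: field_simps)
  have "norm ((a - a0) / (\<zeta> - a0)) < 1"
    using assms nz by (simp add: norm_divide divide_simps)
  hence "Re ((a - a0) / (\<zeta> - a0)) < 1"
    by (meson abs_Re_le_cmod abs_le_D1 le_less_trans)
  hence "Re ((\<zeta> - a) / (\<zeta> - a0)) > 0" by (simp add: eq)
  thus ?thesis by (auto simp: complex_nonpos_Reals_iff)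
qed

lemma core:
  fixes q :: "complex \<Rightarrow> complex" and \<gamma> :: "real \<Rightarrow> complex"
  assumes T: "open T" and vp: "valid_path \<gamma>" and pT: "path_image \<gamma> \<subseteq> T"
    and qh: "q holomorphic_on T" and r: "r > 0" and far: "\<And>\<zeta>. \<zeta> \<in> T \<Longrightarrow> r \<le> norm (\<zeta> - a0)"
  shows "((\<lambda>a. contour_integral \<gamma> (\<lambda>\<zeta>. q \<zeta> / csqrt ((\<zeta> - a) / (\<zeta> - a0)))) has_field_derivative
          contour_integral \<gamma> (\<lambda>\<zeta>. q \<zeta> / (2 * (\<zeta> - a0)))) (at a0)"
proof -
  define \<Phi> where "\<Phi> a = contour_integral \<gamma> (\<lambda>\<zeta>. q \<zeta> / csqrt ((\<zeta> - a) / (\<zeta> - a0)))" for a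
  define D where "D = contour_integral \<gamma> (\<lambda>\<zeta>. q \<zeta> / (2 * (\<zeta> - a0)))"
  have Tne: "\<zeta> \<noteq> a0" if "\<zeta> \<in> T" for \<zeta> using far[OF that] r by auto
  have qc: "continuous_on T q" using qh holomorphic_on_imp_continuous_on by blast
  have "compact (q ` path_image \<gamma>)"
    by (rule compact_continuous_image[OF continuous_on_subset[OF qc pT] compact_valid_path_image[OF vp]])
  then obtain M where M: "\<And>\<zeta>. \<zeta> \<in> path_image \<gamma> \<Longrightarrow> norm (q \<zeta>) \<le> M"
    by (meson bounded_iff compact_imp_bounded imageI)
  define T' where "T' = T \<inter> q -` ball 0 (M+1)"
  have oT': "open T'" unfolding T'_def by (rule continuous_open_preimage[OF qc T open_ball])
  have pT': "path_image \<gamma> \<subseteq> T'" using pT M by (force simp: T'_def)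
  have T'T: "T' \<subseteq> T" by (auto simp: T'_def)
  have qT': "norm (q \<zeta>) < M + 1" if "\<zeta> \<in> T'" for \<zeta> using that by (auto simp: T'_def)
  obtain L where L: "L > 0" "\<And>f B. f holomorphic_on T' \<Longrightarrow> (\<And>z. z \<in> T' \<Longrightarrow> norm (f z) \<le> B)
      \<Longrightarrow> norm (contour_integral \<gamma> f) \<le> L * B"
    using contour_integral_bound_exists[OF oT' vp pT'] by blast
  have holo: "(\<lambda>\<zeta>. q \<zeta> / csqrt ((\<zeta> - a) / (\<zeta> - a0))) holomorphic_on T" if "norm (a - a0) < r" for a
    using that far Tne w_notin
    by (intro holomorphic_intros qh) (auto, metis far not_le)
  have Phi0: "\<Phi> a0 = contour_integral \<gamma> q"
    unfolding \<Phi>_def using pT Tne by (intro contour_integral_eq) auto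
  define K where "K = L * ((M + 1) * 4 / r^2)"
  have ev: "\<forall>\<^sub>F a in at a0. norm ((\<Phi> a - \<Phi> a0) / (a - a0) - D) \<le> K * norm (a - a0)"
    unfolding eventually_at
  proof (intro exI[of _ "r/2"] conjI ballI impI)
    show "r/2 > 0" using r by simp
    fix a assume "a \<in> UNIV" and a: "a \<noteq> a0 \<and> dist a a0 < r / 2"
    hence ar: "norm (a - a0) < r/2" "a \<noteq> a0" by (auto simp: dist_norm)
    hence ar': "norm (a - a0) < r" using norm_ge_zero[of "a - a0"] by linarith
    define E where "E \<zeta> = (q \<zeta> / csqrt ((\<zeta> - a) / (\<zeta> - a0)) - q \<zeta>) / (a - a0) - q \<zeta> / (2 * (\<zeta> - a0))" for \<zeta>
    have i1: "(\<lambda>\<zeta>. q \<zeta> / csqrt ((\<zeta> - a) / (\<zeta> - a0))) contour_integrable_on \<gamma>"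
      by (rule contour_integrable_holomorphic_simple[OF holo[OF ar'] T vp pT])
    have i2: "q contour_integrable_on \<gamma>"
      by (rule contour_integrable_holomorphic_simple[OF qh T vp pT])
    have i3: "(\<lambda>\<zeta>. q \<zeta> / (2 * (\<zeta> - a0))) contour_integrable_on \<gamma>"
      using Tne by (intro contour_integrable_holomorphic_simple[OF _ T vp pT] holomorphic_intros qh) auto
    have "(E has_contour_integral ((\<Phi> a - \<Phi> a0) / (a - a0) - D)) \<gamma>"
      unfolding E_def Phi0 unfolding \<Phi>_def D_def
      by (intro has_contour_integral_diff has_contour_integral_div has_contour_integral_integral i1 i2 i3)
    hence Eeq: "contour_integral \<gamma> E = (\<Phi> a - \<Phi> a0) / (a - a0) - D"
      by (rule contour_integral_unique)
    have Eh: "E holomorphic_on T'"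
    proof -
      have "E holomorphic_on T"
        unfolding E_def using ar(2) Tne by (intro holomorphic_intros holo[OF ar'] qh) auto
      thus ?thesis using T'T holomorphic_on_subset by blast
    qed
    have Eb: "norm (E \<zeta>) \<le> (M + 1) * 4 / r^2 * norm (a - a0)" if z: "\<zeta> \<in> T'" for \<zeta>
    proof -
      have zT: "\<zeta> \<in> T" using z T'T by auto
      have nz: "\<zeta> - a0 \<noteq> 0" using Tne[OF zT] by simp
      have fz: "r \<le> norm (\<zeta> - a0)" using far[OF zT] .
      define u where "u = (a - a0) / (\<zeta> - a0)"
      define s where "s = csqrt (1 - u)"
      have w: "(\<zeta> - a) / (\<zeta> - a0) = 1 - u" unfolding u_def using nz by (simp add: field_simps)
      have nu: "norm u = norm (a - a0) / norm (\<zeta> - a0)" by (simp add: u_def norm_divide)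
      have un: "norm u \<le> 1/2"
        unfolding nu using ar fz r by (simp add: divide_simps)
      have sb: "norm (1/s - 1 - u/2) \<le> 4 * (norm u)^2"
        by (metis sbound s_def power2_csqrt Re_csqrt un)
      have M1: "0 \<le> M + 1" using qT'[OF z] by (smt (verit) norm_ge_zero)
      have sz: "s \<noteq> 0"
      proof
        assume "s = 0" hence "u = 1" by (simp add: s_def)
        thus False using un by simp
      qed
      have Eeq: "E \<zeta> = q \<zeta> * (1/s - 1 - u/2) / (a - a0)"
        unfolding E_def w s_def[symmetric] using nz ar(2) sz
        by (simp add: u_def field_simps)
      have nu2: "(norm u)^2 \<le> (norm (a - a0))^2 / r^2"
        unfolding nu power_divide using fz r
        by (intro divide_left_mono power_mono) (auto intro!: mult_pos_pos)
      have "norm (E \<zeta>) = norm (q \<zeta>) * norm (1/s - 1 - u/2) / norm (a - a0)"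
        by (simp add: Eeq norm_mult norm_divide)
      also have "\<dots> \<le> (M + 1) * (4 * (norm u)^2) / norm (a - a0)"
        using qT'[OF z] sb M1 by (intro divide_right_mono mult_mono) auto
      also have "\<dots> \<le> (M + 1) * (4 * ((norm (a - a0))^2 / r^2)) / norm (a - a0)"
        using M1 nu2 by (intro divide_right_mono mult_left_mono) auto
      also have "\<dots> = (M + 1) * 4 / r^2 * norm (a - a0)"
        using ar(2) r by (simp add: power2_eq_square divide_simps)
      finally show ?thesis .
    qed
    have "norm (contour_integral \<gamma> E) \<le> L * ((M + 1) * 4 / r^2 * norm (a - a0))"
      by (rule L(2)[OF Eh Eb])
    thus "norm ((\<Phi> a - \<Phi> a0) / (a - a0) - D) \<le> K * norm (a - a0)"
      by (simp add: Eeq K_def)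
  qed
  have "((\<lambda>a. K * norm (a - a0)) \<longlongrightarrow> 0) (at a0)"
    by (intro tendsto_eq_intros) auto
  hence "((\<lambda>a. (\<Phi> a - \<Phi> a0) / (a - a0) - D) \<longlongrightarrow> 0) (at a0)"
    by (rule Lim_null_comparison[OF ev])
  hence "((\<lambda>a. (\<Phi> a - \<Phi> a0) / (a - a0)) \<longlongrightarrow> D) (at a0)"
    by (rule LIM_zero_cancel)
  thus ?thesis unfolding has_field_derivative_iff \<Phi>_def D_def .
qed

lemma branch_rep:
  fixes F :: "complex \<Rightarrow> complex"
  assumes cont: "continuous_on (ball a0 r) F"
    and sq: "\<And>b. b \<in> ball a0 r \<Longrightarrow> (F b)^2 = (F a0)^2 * ((\<zeta> - b) / (\<zeta> - a0))"
    and nz: "F a0 \<noteq> 0" and far: "r \<le> norm (\<zeta> - a0)"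
    and a: "a \<in> ball a0 r"
  shows "F a = F a0 * csqrt ((\<zeta> - a) / (\<zeta> - a0))"
proof -
  have r: "r > 0" using a by (auto simp: dist_norm) (smt (verit) norm_ge_zero)
  have za0: "\<zeta> \<noteq> a0" using far r by auto
  define t where "t b = F b / (F a0 * csqrt ((\<zeta> - b) / (\<zeta> - a0)))" for b
  have wn: "(\<zeta> - b) / (\<zeta> - a0) \<notin> \<real>\<^sub>\<le>\<^sub>0" if "b \<in> ball a0 r" for b
    using that far by (intro w_notin) (auto simp: dist_norm norm_minus_commute)
  have wnz: "csqrt ((\<zeta> - b) / (\<zeta> - a0)) \<noteq> 0" if "b \<in> ball a0 r" for b
    using wn[OF that] by auto
  have tc: "continuous_on (ball a0 r) t"
    unfolding t_def using wn wnz nz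
    by (intro continuous_intros cont continuous_on_compose2[OF continuous_on_csqrt]) auto
  have t2: "t b \<in> {1, -1}" if "b \<in> ball a0 r" for b
  proof -
    have "(t b)^2 = 1"
      using sq[OF that] wnz[OF that] nz unfolding t_def
      by (simp add: power_divide power_mult_distrib)
    thus ?thesis by (simp add: power2_eq_1_iff)
  qed
  have "finite (t ` ball a0 r)"
    by (rule finite_subset[of _ "{1, -1}"]) (use t2 in blast, simp)
  hence "t constant_on ball a0 r"
    by (intro continuous_finite_range_constant tc) auto
  moreover have "t a0 = 1" using za0 nz by (simp add: t_def)
  moreover have "a0 \<in> ball a0 r" using r by simp
  ultimately have "t a = 1" using a unfolding constant_on_def by metis
  thus ?thesis using wnz[OF a] nz unfolding t_def by (simp add: divide_eq_1_iff)
qed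

lemma Ppoly_rel:
  assumes "j < 6"
  shows "Ppoly al j a \<zeta> * (\<zeta> - al j) = Ppoly al j (al j) \<zeta> * (\<zeta> - a)"
proof -
  have A: "j \<in> {..<6::nat}" using assms by simp
  have c: "(\<Prod>k\<in>{..<6} - {j}. (\<zeta> - brpt al j b k)) = (\<Prod>k\<in>{..<6} - {j}. (\<zeta> - al k))" for b
    by (rule prod.cong) (auto simp: brpt_def)
  have "Ppoly al j a \<zeta> = (\<zeta> - a) * (\<Prod>k\<in>{..<6} - {j}. (\<zeta> - al k))"
    unfolding Ppoly_def c[of a, symmetric] using prod.remove[OF _ A, of "\<lambda>k. \<zeta> - brpt al j a k"]
    by (simp add: brpt_def)
  moreover have "Ppoly al j (al j) \<zeta> = (\<zeta> - al j) * (\<Prod>k\<in>{..<6} - {j}. (\<zeta> - al k))"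
    unfolding Ppoly_def c[of "al j", symmetric] using prod.remove[OF _ A, of "\<lambda>k. \<zeta> - brpt al j (al j) k"]
    by (simp add: brpt_def)
  ultimately show ?thesis by simp
qed

lemma Ppoly_nz:
  assumes "\<And>k. k < 6 \<Longrightarrow> \<zeta> \<noteq> al k"
  shows "Ppoly al j (al j) \<zeta> \<noteq> 0"
  using assms unfolding Ppoly_def brpt_def by auto

lemma sqrt_holo:
  fixes F P :: "complex \<Rightarrow> complex"
  assumes T: "open T" and Fc: "continuous_on T F" and sq: "\<And>\<zeta>. \<zeta> \<in> T \<Longrightarrow> (F \<zeta>)^2 = P \<zeta>"
    and Ph: "P holomorphic_on T" and nz: "\<And>\<zeta>. \<zeta> \<in> T \<Longrightarrow> F \<zeta> \<noteq> 0"
  shows "F holomorphic_on T"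
  unfolding holomorphic_on_open[OF T]
proof
  fix x assume x: "x \<in> T"
  have dP: "(P has_field_derivative deriv P x) (at x)" by (rule holomorphic_derivI[OF Ph T x])
  have Fx: "(F \<longlongrightarrow> F x) (at x)"
  proof -
    have "isCont F x" using Fc T x continuous_on_eq_continuous_at by blast
    thus ?thesis by (rule isContD)
  qed
  have l1: "((\<lambda>y. (P y - P x) / (y - x)) \<longlongrightarrow> deriv P x) (at x)"
    using dP unfolding has_field_derivative_iff .
  have l2: "((\<lambda>y. F y + F x) \<longlongrightarrow> F x + F x) (at x)"
    by (intro tendsto_intros Fx)
  have lim: "((\<lambda>y. ((P y - P x) / (y - x)) / (F y + F x)) \<longlongrightarrow> deriv P x / (F x + F x)) (at x)"
    using nz[OF x] by (intro tendsto_divide l1 l2) simp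
  have ev1: "\<forall>\<^sub>F y in at x. F y + F x \<noteq> 0"
  proof (rule tendsto_imp_eventually_ne[OF l2])
    show "F x + F x \<noteq> 0" using nz[OF x] by simp
  qed
  have ev2: "\<forall>\<^sub>F y in at x. y \<in> T - {x}" by (rule eventually_at_in_open[OF T x])
  have "\<forall>\<^sub>F y in at x. ((P y - P x) / (y - x)) / (F y + F x) = (F y - F x) / (y - x)"
    using ev1 ev2
  proof eventually_elim
    case (elim y)
    have "P y - P x = (F y - F x) * (F y + F x)"
    proof -
      have "P y = F y * F y" "P x = F x * F x" using sq[of y] sq[of x] x elim by (auto simp: power2_eq_square)
      thus ?thesis by (simp add: algebra_simps)
    qed
    hence "((P y - P x) / (y - x)) / (F y + F x) = ((F y - F x) * (F y + F x)) / ((y - x) * (F y + F x))"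
      by simp
    also have "\<dots> = (F y - F x) / (y - x)"
      using elim(1) by (rule mult_divide_mult_cancel_right)
    finally show ?case .
  qed
  hence "((\<lambda>y. (F y - F x) / (y - x)) \<longlongrightarrow> deriv P x / (F x + F x)) (at x)"
    by (rule Lim_transform_eventually[OF lim])
  thus "\<exists>f'. (F has_field_derivative f') (at x)"
    unfolding has_field_derivative_iff by blast
qed

locale pathctx =
  fixes T :: "complex set" and \<gamma> :: "real \<Rightarrow> complex" and Rf :: "complex \<Rightarrow> complex \<Rightarrow> complex"
    and a0 :: complex and r :: real
  assumes T: "open T" and vp: "valid_path \<gamma>" and pT: "path_image \<gamma> \<subseteq> T"
    and \<rho>h: "Rf a0 holomorphic_on T" and \<rho>nz: "\<And>\<zeta>. \<zeta> \<in> T \<Longrightarrow> Rf a0 \<zeta> \<noteq> 0"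
    and r: "r > 0" and far: "\<And>\<zeta>. \<zeta> \<in> T \<Longrightarrow> r \<le> norm (\<zeta> - a0)"
    and rep: "\<And>a \<zeta>. a \<in> ball a0 r \<Longrightarrow> \<zeta> \<in> T \<Longrightarrow> Rf a \<zeta> = Rf a0 \<zeta> * csqrt ((\<zeta> - a) / (\<zeta> - a0))"
begin

lemma Tne: "\<zeta> \<in> T \<Longrightarrow> \<zeta> \<noteq> a0" using far r by force

lemma gen:
  assumes G: "G holomorphic_on T"
  shows "((\<lambda>a. contour_integral \<gamma> (\<lambda>\<zeta>. G \<zeta> / Rf a \<zeta>)) has_field_derivative
           contour_integral \<gamma> (\<lambda>\<zeta>. (G \<zeta> / Rf a0 \<zeta>) / (2 * (\<zeta> - a0)))) (at a0)"
proof (rule has_field_derivative_transform_within_open)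
  show "((\<lambda>a. contour_integral \<gamma> (\<lambda>\<zeta>. (G \<zeta> / Rf a0 \<zeta>) / csqrt ((\<zeta> - a) / (\<zeta> - a0)))) has_field_derivative
           contour_integral \<gamma> (\<lambda>\<zeta>. (G \<zeta> / Rf a0 \<zeta>) / (2 * (\<zeta> - a0)))) (at a0)"
    using \<rho>nz by (intro core[OF T vp pT _ r far] holomorphic_intros G \<rho>h) auto
  show "open (ball a0 r)" by simp
  show "a0 \<in> ball a0 r" using r by simp
  fix a assume a: "a \<in> ball a0 r"
  show "contour_integral \<gamma> (\<lambda>\<zeta>. G \<zeta> / Rf a0 \<zeta> / csqrt ((\<zeta> - a) / (\<zeta> - a0))) =
        contour_integral \<gamma> (\<lambda>\<zeta>. G \<zeta> / Rf a \<zeta>)"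
    using a pT by (intro contour_integral_eq) (auto simp: rep)
qed

lemma integ:
  assumes "G holomorphic_on T"
  shows "G contour_integrable_on \<gamma>"
  by (rule contour_integrable_holomorphic_simple[OF assms T vp pT])

lemma hci: "G holomorphic_on T \<Longrightarrow> (G has_contour_integral contour_integral \<gamma> G) \<gamma>"
  using integ has_contour_integral_integral by blast

lemma d0:
  assumes g: "g holomorphic_on T"
  shows "((\<lambda>a. contour_integral \<gamma> (\<lambda>\<zeta>. g \<zeta> / Rf a \<zeta>)) has_field_derivative
           1/2 * contour_integral \<gamma> (\<lambda>\<zeta>. g \<zeta> / ((\<zeta> - a0) * Rf a0 \<zeta>))) (at a0)"
proof -
  have h: "(\<lambda>\<zeta>. g \<zeta> / ((\<zeta> - a0) * Rf a0 \<zeta>)) holomorphic_on T"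
    using Tne \<rho>nz by (intro holomorphic_intros g \<rho>h) auto
  have e: "((\<lambda>\<zeta>. (g \<zeta> / Rf a0 \<zeta>) / (2 * (\<zeta> - a0))) has_contour_integral
          1/2 * contour_integral \<gamma> (\<lambda>\<zeta>. g \<zeta> / ((\<zeta> - a0) * Rf a0 \<zeta>))) \<gamma>"
    by (rule has_contour_integral_eq[OF has_contour_integral_lmul[OF hci[OF h]]]) (simp add: field_simps)
  from gen[OF g] show ?thesis unfolding contour_integral_unique[OF e] .
qed

lemma d1:
  assumes g: "g holomorphic_on T"
  shows "((\<lambda>a. contour_integral \<gamma> (\<lambda>\<zeta>. \<zeta> * g \<zeta> / Rf a \<zeta>)) has_field_derivative
           1/2 * (contour_integral \<gamma> (\<lambda>\<zeta>. g \<zeta> / Rf a0 \<zeta>)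
             + a0 * contour_integral \<gamma> (\<lambda>\<zeta>. g \<zeta> / ((\<zeta> - a0) * Rf a0 \<zeta>)))) (at a0)"
proof -
  have h: "(\<lambda>\<zeta>. g \<zeta> / ((\<zeta> - a0) * Rf a0 \<zeta>)) holomorphic_on T"
    using Tne \<rho>nz by (intro holomorphic_intros g \<rho>h) auto
  have h2: "(\<lambda>\<zeta>. g \<zeta> / Rf a0 \<zeta>) holomorphic_on T"
    using Tne \<rho>nz by (intro holomorphic_intros g \<rho>h) auto
  have gz: "(\<lambda>\<zeta>. \<zeta> * g \<zeta>) holomorphic_on T" by (intro holomorphic_intros g)
  have e: "((\<lambda>\<zeta>. (\<zeta> * g \<zeta> / Rf a0 \<zeta>) / (2 * (\<zeta> - a0))) has_contour_integral
          1/2 * (contour_integral \<gamma> (\<lambda>\<zeta>. g \<zeta> / Rf a0 \<zeta>)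
             + a0 * contour_integral \<gamma> (\<lambda>\<zeta>. g \<zeta> / ((\<zeta> - a0) * Rf a0 \<zeta>)))) \<gamma>"
  proof (rule has_contour_integral_eq[OF has_contour_integral_lmul[OF has_contour_integral_add[OF hci[OF h2] has_contour_integral_lmul[OF hci[OF h]]]]])
    fix \<zeta> assume z: "\<zeta> \<in> path_image \<gamma>"
    hence "\<zeta> - a0 \<noteq> 0" "Rf a0 \<zeta> \<noteq> 0" using pT Tne \<rho>nz by auto
    thus "1/2 * (g \<zeta> / Rf a0 \<zeta> + a0 * (g \<zeta> / ((\<zeta> - a0) * Rf a0 \<zeta>))) = \<zeta> * g \<zeta> / Rf a0 \<zeta> / (2 * (\<zeta> - a0))"
      by (simp add: field_simps)
  qed
  from gen[OF gz] show ?thesis unfolding contour_integral_unique[OF e] .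
qed

lemma dz:
  assumes g: "g holomorphic_on T" and w: "w \<notin> T" "w \<noteq> a0"
  shows "((\<lambda>a. contour_integral \<gamma> (\<lambda>\<zeta>. g \<zeta> / ((\<zeta> - w) * Rf a \<zeta>))) has_field_derivative
           (contour_integral \<gamma> (\<lambda>\<zeta>. g \<zeta> / ((\<zeta> - w) * Rf a0 \<zeta>))
             - contour_integral \<gamma> (\<lambda>\<zeta>. g \<zeta> / ((\<zeta> - a0) * Rf a0 \<zeta>))) / (2 * (w - a0))) (at a0)"
proof -
  have h: "(\<lambda>\<zeta>. g \<zeta> / ((\<zeta> - a0) * Rf a0 \<zeta>)) holomorphic_on T"
    using Tne \<rho>nz by (intro holomorphic_intros g \<rho>h) auto
  have h2: "(\<lambda>\<zeta>. g \<zeta> / ((\<zeta> - w) * Rf a0 \<zeta>)) holomorphic_on T"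
    using w \<rho>nz by (intro holomorphic_intros g \<rho>h) auto
  have gz: "(\<lambda>\<zeta>. g \<zeta> / (\<zeta> - w)) holomorphic_on T" using w by (intro holomorphic_intros g) auto
  have e: "((\<lambda>\<zeta>. (g \<zeta> / (\<zeta> - w) / Rf a0 \<zeta>) / (2 * (\<zeta> - a0))) has_contour_integral
          (contour_integral \<gamma> (\<lambda>\<zeta>. g \<zeta> / ((\<zeta> - w) * Rf a0 \<zeta>))
             - contour_integral \<gamma> (\<lambda>\<zeta>. g \<zeta> / ((\<zeta> - a0) * Rf a0 \<zeta>))) / (2 * (w - a0))) \<gamma>"
  proof (rule has_contour_integral_eq[OF has_contour_integral_div[OF has_contour_integral_diff[OF hci[OF h2] hci[OF h]]]])
    fix \<zeta> assume z: "\<zeta> \<in> path_image \<gamma>"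
    hence "\<zeta> - a0 \<noteq> 0" "\<zeta> - w \<noteq> 0" "w - a0 \<noteq> 0" "Rf a0 \<zeta> \<noteq> 0" using pT Tne w \<rho>nz by auto
    thus "(g \<zeta> / ((\<zeta> - w) * Rf a0 \<zeta>) - g \<zeta> / ((\<zeta> - a0) * Rf a0 \<zeta>)) / (2 * (w - a0)) =
          g \<zeta> / (\<zeta> - w) / Rf a0 \<zeta> / (2 * (\<zeta> - a0))"
      by (simp add: divide_simps) (simp add: algebra_simps)
  qed
  have f: "(\<lambda>\<zeta>. g \<zeta> / (\<zeta> - w) / Rf a \<zeta>) = (\<lambda>\<zeta>. g \<zeta> / ((\<zeta> - w) * Rf a \<zeta>))" for a
    by (simp add: field_simps)
  show ?thesis using gen[OF gz] unfolding contour_integral_unique[OF e] f .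
qed

end


lemma det3_deriv:
  fixes e11 e12 e13 e21 e22 e23 e31 e32 e33 :: "complex \<Rightarrow> complex"
  assumes "(e11 has_field_derivative d11) (at x)" "(e12 has_field_derivative d12) (at x)"
    "(e13 has_field_derivative d13) (at x)" "(e21 has_field_derivative d21) (at x)"
    "(e22 has_field_derivative d22) (at x)" "(e23 has_field_derivative d23) (at x)"
    "(e31 has_field_derivative d31) (at x)" "(e32 has_field_derivative d32) (at x)"
    "(e33 has_field_derivative d33) (at x)"
  shows "((\<lambda>a. det3 (e11 a) (e12 a) (e13 a) (e21 a) (e22 a) (e23 a) (e31 a) (e32 a) (e33 a))
     has_field_derivative
       det3 d11 (e12 x) (e13 x) d21 (e22 x) (e23 x) d31 (e32 x) (e33 x)
     + det3 (e11 x) d12 (e13 x) (e21 x) d22 (e23 x) (e31 x) d32 (e33 x)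
     + det3 (e11 x) (e12 x) d13 (e21 x) (e22 x) d23 (e31 x) (e32 x) d33) (at x)"
  unfolding det3_def
  apply (rule derivative_eq_intros assms refl)+
  apply (simp add: algebra_simps)
  done

lemma det2_deriv:
  fixes f1 g1 f2 g2 :: "complex \<Rightarrow> complex"
  assumes "(f1 has_field_derivative A) (at x)" "(g1 has_field_derivative B) (at x)"
    "(f2 has_field_derivative C) (at x)" "(g2 has_field_derivative E) (at x)"
  shows "((\<lambda>a. f1 a * g1 a - f2 a * g2 a) has_field_derivative A * g1 x + f1 x * B - (C * g2 x + f2 x * E)) (at x)"
  using DERIV_diff[OF DERIV_mult[OF assms(1,2)] DERIV_mult[OF assms(3,4)]] by (simp add: algebra_simps)

lemma comb0:
  fixes F1 F2 F :: "complex \<Rightarrow> complex"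
  assumes "(F1 has_field_derivative 1/2 * A1) (at x)" "(F2 has_field_derivative 1/2 * A2) (at x)"
  shows "((\<lambda>a. F1 a + F2 a) has_field_derivative (A1 + A2) / 2) (at x)"
  using DERIV_add[OF assms] by (simp add: add_divide_distrib)

lemma comb1:
  fixes F1 F2 F :: "complex \<Rightarrow> complex"
  assumes "(F1 has_field_derivative 1/2 * (B1 + c * A1)) (at x)" "(F2 has_field_derivative 1/2 * (B2 + c * A2)) (at x)"
  shows "((\<lambda>a. F1 a + F2 a) has_field_derivative 1/2 * ((B1 + B2) + c * (A1 + A2))) (at x)"
proof -
  have e: "1/2 * (B1 + c * A1) + 1/2 * (B2 + c * A2) = 1/2 * ((B1 + B2) + c * (A1 + A2))"
    by (simp add: field_simps)
  show ?thesis using DERIV_add[OF assms] unfolding e .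
qed

lemma comb2:
  fixes F1 F2 F :: "complex \<Rightarrow> complex"
  assumes "(F1 has_field_derivative (Z1 - A1) / (2 * d)) (at x)" "(F2 has_field_derivative (Z2 - A2) / (2 * d)) (at x)"
  shows "((\<lambda>a. F1 a + F2 a) has_field_derivative ((Z1 + Z2) - (A1 + A2)) / (2 * d)) (at x)"
proof -
  have e: "(Z1 - A1) / (2 * d) + (Z2 - A2) / (2 * d) = ((Z1 + Z2) - (A1 + A2)) / (2 * d)"
    by (simp add: add_divide_distrib[symmetric] algebra_simps)
  show ?thesis using DERIV_add[OF assms] unfolding e .
qed

lemma half_conv:
  fixes F1 F2 F :: "complex \<Rightarrow> complex"
  assumes "(F has_field_derivative 1/2 * A) (at x)"
  shows "(F has_field_derivative A / 2) (at x)"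
  using assms by simp


lemma alg:
  fixes m0 m1 mz ma c0 c1 cz ca f0 f1 fz fa W \<Omega> a z Rz p :: complex
  assumes det0: "det3 m0 m1 ma c0 c1 ca f0 f1 fa = 0"
    and Dnz: "m0 * c1 - m1 * c0 \<noteq> 0"
    and w0: "f0 + W * m0 + \<Omega> * c0 = 0" and w1: "f1 + W * m1 + \<Omega> * c1 = 0"
    and za: "z \<noteq> a" and Rz: "Rz \<noteq> 0" and p: "p \<noteq> 0"
  shows "1 / p * (det3 (ma/2) m1 mz (ca/2) c1 cz (fa/2) f1 fz
          + det3 m0 (1/2 * (m0 + a * ma)) mz c0 (1/2 * (c0 + a * ca)) cz f0 (1/2 * (f0 + a * fa)) fz
          + det3 m0 m1 ((mz - ma) / (2 * (z - a))) c0 c1 ((cz - ca) / (2 * (z - a))) f0 f1 ((fz - fa) / (2 * (z - a))))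
       = Rz / p * (fz + W * mz + \<Omega> * cz) / Rz
         * ((m0 * c1 - m1 * c0) / (2 * (z - a))
            + ((ma/2) * c1 + m0 * (1/2 * (c0 + a * ca)) - ((1/2 * (m0 + a * ma)) * c0 + m1 * (ca/2))))"
proof -
  define D where "D = m0 * c1 - m1 * c0"
  define l where "l = (ma * c1 - m1 * ca) / D"
  define u where "u = (m0 * ca - ma * c0) / D"
  have Dn: "D \<noteq> 0" using Dnz by (simp add: D_def)
  have lD: "l * D = ma * c1 - m1 * ca" using Dn by (simp add: l_def)
  have uD: "u * D = m0 * ca - ma * c0" using Dn by (simp add: u_def)
  have "(l * m0 + u * m1) * D = m0 * (l * D) + m1 * (u * D)" by (simp add: algebra_simps)
  also have "\<dots> = ma * D" unfolding lD uD by (simp add: D_def algebra_simps)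
  finally have ma: "ma = l * m0 + u * m1" using Dn by simp
  have "(l * c0 + u * c1) * D = c0 * (l * D) + c1 * (u * D)" by (simp add: algebra_simps)
  also have "\<dots> = ca * D" unfolding lD uD by (simp add: D_def algebra_simps)
  finally have ca: "ca = l * c0 + u * c1" using Dn by simp
  have "det3 m0 m1 ma c0 c1 ca f0 f1 fa = D * fa - f0 * (ma * c1 - m1 * ca) - f1 * (m0 * ca - ma * c0)"
    unfolding det3_def D_def by (simp add: algebra_simps)
  also have "\<dots> = D * fa - f0 * (l * D) - f1 * (u * D)" unfolding lD uD ..
  also have "\<dots> = D * (fa - l * f0 - u * f1)" by (simp add: algebra_simps)
  finally have "det3 m0 m1 ma c0 c1 ca f0 f1 fa = D * (fa - l * f0 - u * f1)" .
  hence "fa - l * f0 - u * f1 = 0" using det0 Dn by simp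
  hence fa: "fa = l * f0 + u * f1" by (metis diff_diff_eq eq_iff_diff_eq_0)
  have f0: "f0 = - W * m0 - \<Omega> * c0" using w0 by (simp add: algebra_simps eq_neg_iff_add_eq_0)
  have f1: "f1 = - W * m1 - \<Omega> * c1" using w1 by (simp add: algebra_simps eq_neg_iff_add_eq_0)
  define E where "E = det3 m0 m1 mz c0 c1 cz f0 f1 fz"
  define K where "K = fz + W * mz + \<Omega> * cz"
  have E: "E = D * K" unfolding E_def K_def D_def f0 f1 det3_def by (simp add: algebra_simps)
  have A: "det3 (ma/2) m1 mz (ca/2) c1 cz (fa/2) f1 fz = l/2 * E"
    unfolding E_def ma ca fa det3_def by (simp add: field_simps; simp add: algebra_simps)
  have B: "det3 m0 (1/2 * (m0 + a * ma)) mz c0 (1/2 * (c0 + a * ca)) cz f0 (1/2 * (f0 + a * fa)) fz = a * u / 2 * E"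
    unfolding E_def ma ca fa det3_def by (simp add: field_simps; simp add: algebra_simps)
  have C0: "det3 m0 m1 ((mz - ma) / (2 * (z - a))) c0 c1 ((cz - ca) / (2 * (z - a))) f0 f1 ((fz - fa) / (2 * (z - a)))
      = (E - det3 m0 m1 ma c0 c1 ca f0 f1 fa) / (2 * (z - a))"
    unfolding E_def det3_def using za by (simp add: divide_simps; simp add: algebra_simps)
  have Dp: "(ma/2) * c1 + m0 * (1/2 * (c0 + a * ca)) - ((1/2 * (m0 + a * ma)) * c0 + m1 * (ca/2)) = (l * D + a * (u * D)) / 2"
    unfolding lD uD by (simp add: field_simps; simp add: algebra_simps)
  have "1 / p * (det3 (ma/2) m1 mz (ca/2) c1 cz (fa/2) f1 fz
          + det3 m0 (1/2 * (m0 + a * ma)) mz c0 (1/2 * (c0 + a * ca)) cz f0 (1/2 * (f0 + a * fa)) fz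
          + det3 m0 m1 ((mz - ma) / (2 * (z - a))) c0 c1 ((cz - ca) / (2 * (z - a))) f0 f1 ((fz - fa) / (2 * (z - a))))
        = 1 / p * (l/2 * (D * K) + a * u / 2 * (D * K) + (D * K) / (2 * (z - a)))"
    unfolding A B C0 det0 E by simp
  also have "\<dots> = Rz / p * K / Rz * (D / (2 * (z - a)) + (l * D + a * (u * D)) / 2)"
    using za Rz p by (simp add: field_simps; simp add: algebra_simps)
  finally show ?thesis unfolding Dp unfolding K_def D_def .
qed


theorem lemma1:
  fixes al :: "nat \<Rightarrow> complex" and j :: nat
    and f :: "complex \<Rightarrow> complex" and U :: "complex set"
    and R Rc :: "complex \<Rightarrow> complex \<Rightarrow> complex" and S Sc :: "complex set" and r :: real
    and gm0 gmp_arc gmm_arc gcp_arc gcm_arc :: "real \<Rightarrow> complex"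
    and gh gmp gmm gcp gcm :: "real \<Rightarrow> complex"
    and W \<Omega> z :: complex
  assumes
    \<comment> \<open>genus-two branchpoints\<close>
    upper: "Im (al 0) > 0" "Im (al 2) > 0" "Im (al 4) > 0"
    and conj: "al 1 = cnj (al 0)" "al 3 = cnj (al 2)" "al 5 = cnj (al 4)"
    and distinct: "inj_on al {..<6}"
    and j: "j < 6"
    \<comment> \<open>main and complementary arcs, with their orientations; together they form the arc gamma\<close>
    and arc_ends:
      "pathstart gm0 = al 1" "pathfinish gm0 = al 0"
      "pathstart gmp_arc = al 2" "pathfinish gmp_arc = al 4"
      "pathstart gmm_arc = al 5" "pathfinish gmm_arc = al 3"
      "pathstart gcp_arc = al 0" "pathfinish gcp_arc = al 2"
      "pathstart gcm_arc = al 3" "pathfinish gcm_arc = al 1"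
    and gamma_arc: "arc (gmm_arc +++ gcm_arc +++ gm0 +++ gcp_arc +++ gmp_arc)"
    \<comment> \<open>R (at the actual value of alpha_j) is the square root with branchcuts on the main arcs\<close>
    and R_sq: "\<And>\<zeta>. (R (al j) \<zeta>)\<^sup>2 = Ppoly al j (al j) \<zeta>"
    and R_hol: "R (al j) holomorphic_on
                  - (path_image gm0 \<union> path_image gmp_arc \<union> path_image gmm_arc)"
    \<comment> \<open>f: analytic near the loop hat-gamma, Schwarz-symmetric\<close>
    and f_hol: "open U" "f holomorphic_on U" "path_image gh \<subseteq> U"
    and f_schwarz: "\<And>w. w \<in> U \<Longrightarrow> cnj w \<in> U \<and> f (cnj w) = cnj (f w)"
    \<comment> \<open>contours\<close>
    and loops: "valid_path gh" "simple_path gh" "pathfinish gh = pathstart gh"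
      "valid_path gmp" "simple_path gmp" "pathfinish gmp = pathstart gmp"
      "valid_path gmm" "simple_path gmm" "pathfinish gmm = pathstart gmm"
      "valid_path gcp" "pathfinish gcp = pathstart gcp"
      "valid_path gcm" "pathfinish gcm = pathstart gcm"
    and gh_around: "path_image (gmm_arc +++ gcm_arc +++ gm0 +++ gcp_arc +++ gmp_arc)
                      \<subseteq> inside (path_image gh)"
      "path_image gmp \<subseteq> inside (path_image gh)" "path_image gmm \<subseteq> inside (path_image gh)"
      "path_image gcp \<subseteq> inside (path_image gh)" "path_image gcm \<subseteq> inside (path_image gh)"
    and gm_around: "path_image gmp_arc \<subseteq> inside (path_image gmp)"
      "path_image gmm_arc \<subseteq> inside (path_image gmm)"
    and gc_around: "path_image gcp_arc \<subseteq> inside (path_image gcp)"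
      "path_image gcm_arc \<subseteq> inside (path_image gcm)"
    and other_bp_outside:
      "\<And>k. k \<in> {0, 1, 3, 5} \<Longrightarrow> al k \<in> outside (path_image gmp)"
      "\<And>k. k \<in> {0, 1, 2, 4} \<Longrightarrow> al k \<in> outside (path_image gmm)"
      "\<And>k. k \<in> {1, 3, 4, 5} \<Longrightarrow> al k \<in> outside (path_image gcp)"
      "\<And>k. k \<in> {0, 2, 4, 5} \<Longrightarrow> al k \<in> outside (path_image gcm)"
    \<comment> \<open>alpha = alpha_j varies in a disc; R a is the continuous (in a) deformation of the branch,
       on an open neighbourhood S of the contours\<close>
    and S: "open S" "path_image gh \<subseteq> S" "path_image gmp \<subseteq> S" "path_image gmm \<subseteq> S"
    and S_cuts: "S \<inter> (path_image gm0 \<union> path_image gmp_arc \<union> path_image gmm_arc) = {}"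
    and S_bp: "\<And>k. k < 6 \<Longrightarrow> al k \<notin> S"
    and r: "r > 0" "ball (al j) r \<inter> S = {}"
    and R_fam_sq: "\<And>a \<zeta>. a \<in> ball (al j) r \<Longrightarrow> \<zeta> \<in> S \<Longrightarrow> (R a \<zeta>)\<^sup>2 = Ppoly al j a \<zeta>"
    and R_fam_cont: "continuous_on (ball (al j) r \<times> S) (\<lambda>(a, \<zeta>). R a \<zeta>)"
    and R_fam_hol: "\<And>\<zeta>. \<zeta> \<in> S \<Longrightarrow> (\<lambda>a. R a \<zeta>) holomorphic_on ball (al j) r"
    \<comment> \<open>Rc a: the branch of the square root continued along the contours of hat-gamma_c
       (these cross the main-arc cuts), depending continuously on a\<close>
    and Sc: "open Sc" "path_image gcp \<subseteq> Sc" "path_image gcm \<subseteq> Sc"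
    and Sc_bp: "\<And>k. k < 6 \<Longrightarrow> al k \<notin> Sc"
    and r_c: "ball (al j) r \<inter> Sc = {}"
    and Rc_fam_sq: "\<And>a \<zeta>. a \<in> ball (al j) r \<Longrightarrow> \<zeta> \<in> Sc \<Longrightarrow> (Rc a \<zeta>)\<^sup>2 = Ppoly al j a \<zeta>"
    and Rc_fam_cont: "continuous_on (ball (al j) r \<times> Sc) (\<lambda>(a, \<zeta>). Rc a \<zeta>)"
    and Rc_fam_hol: "\<And>\<zeta>. \<zeta> \<in> Sc \<Longrightarrow> (\<lambda>a. Rc a \<zeta>) holomorphic_on ball (al j) r"
    \<comment> \<open>D nonzero, and W, Omega solve the linear equations\<close>
    and D_nz: "Dfun (R (al j)) (Rc (al j)) gmp gmm gcp gcm \<noteq> 0"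
    and W\<Omega>: "\<And>k::nat. k \<in> {0, 1} \<Longrightarrow>
        contour_integral gh (\<lambda>\<zeta>. \<zeta> ^ k * f \<zeta> / R (al j) \<zeta>)
        + W * cint2 gmp gmm (\<lambda>\<zeta>. \<zeta> ^ k / R (al j) \<zeta>)
        + \<Omega> * cint2 gcp gcm (\<lambda>\<zeta>. \<zeta> ^ k / Rc (al j) \<zeta>) = 0"
    \<comment> \<open>modulation equation at alpha_j\<close>
    and modulation: "Kfun (R (al j)) (Rc (al j)) f gh gmp gmm gcp gcm (al j) = 0"
    \<comment> \<open>z inside hat-gamma, outside hat-gamma_m and hat-gamma_c\<close>
    and z: "z \<in> inside (path_image gh)"
      "z \<in> outside (path_image gmp)" "z \<in> outside (path_image gmm)"
      "z \<in> outside (path_image gcp)" "z \<in> outside (path_image gcm)"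
  shows "(\<lambda>a. Kfun (R a) (Rc a) f gh gmp gmm gcp gcm z) field_differentiable (at (al j))
    \<and> (\<lambda>a. Dfun (R a) (Rc a) gmp gmm gcp gcm) field_differentiable (at (al j))
    \<and> deriv (\<lambda>a. Kfun (R a) (Rc a) f gh gmp gmm gcp gcm z) (al j)
       = hfun (R (al j)) (Rc (al j)) f gh gmp gmm gcp gcm W \<Omega> z / R (al j) z
         * (Dfun (R (al j)) (Rc (al j)) gmp gmm gcp gcm / (2 * (z - al j))
            + deriv (\<lambda>a. Dfun (R a) (Rc a) gmp gmm gcp gcm) (al j))"
proof -
  have ajball: "al j \<in> ball (al j) r" using r(1) by simp
  have farS: "r \<le> norm (\<zeta> - al j)" if "\<zeta> \<in> S" for \<zeta>
  proof (rule ccontr)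
    assume "\<not> r \<le> norm (\<zeta> - al j)"
    hence "\<zeta> \<in> ball (al j) r" by (simp add: dist_norm norm_minus_commute)
    thus False using r(2) that by auto
  qed
  have farSc: "r \<le> norm (\<zeta> - al j)" if "\<zeta> \<in> Sc" for \<zeta>
  proof (rule ccontr)
    assume "\<not> r \<le> norm (\<zeta> - al j)"
    hence "\<zeta> \<in> ball (al j) r" by (simp add: dist_norm norm_minus_commute)
    thus False using r_c that by auto
  qed
  have PnzS: "Ppoly al j (al j) \<zeta> \<noteq> 0" if "\<zeta> \<in> S" for \<zeta>
    by (rule Ppoly_nz) (use S_bp that in blast)
  have PnzSc: "Ppoly al j (al j) \<zeta> \<noteq> 0" if "\<zeta> \<in> Sc" for \<zeta>
    by (rule Ppoly_nz) (use Sc_bp that in blast)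
  have RnzS: "R (al j) \<zeta> \<noteq> 0" if "\<zeta> \<in> S" for \<zeta>
    using R_sq[of \<zeta>] PnzS[OF that] by auto
  have RcnzSc: "Rc (al j) \<zeta> \<noteq> 0" if "\<zeta> \<in> Sc" for \<zeta>
    using Rc_fam_sq[OF ajball that] PnzSc[OF that] by auto
  have Prel: "Ppoly al j b \<zeta> = Ppoly al j (al j) \<zeta> * ((\<zeta> - b) / (\<zeta> - al j))" if "\<zeta> \<noteq> al j" for b \<zeta>
  proof -
    have "Ppoly al j b \<zeta> * (\<zeta> - al j) = Ppoly al j (al j) \<zeta> * (\<zeta> - b)" by (rule Ppoly_rel[OF j])
    thus ?thesis using that by (simp add: field_simps)
  qed
  have repS: "R a \<zeta> = R (al j) \<zeta> * csqrt ((\<zeta> - a) / (\<zeta> - al j))" if a: "a \<in> ball (al j) r" and z: "\<zeta> \<in> S" for a \<zeta>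
  proof (rule branch_rep[where F = "\<lambda>a. R a \<zeta>" and r = r, OF _ _ RnzS[OF z] farS[OF z] a])
    show "continuous_on (ball (al j) r) (\<lambda>a. R a \<zeta>)"
      using R_fam_hol[OF z] holomorphic_on_imp_continuous_on by blast
    fix b assume b: "b \<in> ball (al j) r"
    have ne: "\<zeta> \<noteq> al j" using farS[OF z] r(1) by auto
    show "(R b \<zeta>)^2 = (R (al j) \<zeta>)^2 * ((\<zeta> - b) / (\<zeta> - al j))"
      using R_fam_sq[OF b z] R_fam_sq[OF ajball z] Prel[OF ne, of b] by simp
  qed
  have repSc: "Rc a \<zeta> = Rc (al j) \<zeta> * csqrt ((\<zeta> - a) / (\<zeta> - al j))" if a: "a \<in> ball (al j) r" and z: "\<zeta> \<in> Sc" for a \<zeta>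
  proof (rule branch_rep[where F = "\<lambda>a. Rc a \<zeta>" and r = r, OF _ _ RcnzSc[OF z] farSc[OF z] a])
    show "continuous_on (ball (al j) r) (\<lambda>a. Rc a \<zeta>)"
      using Rc_fam_hol[OF z] holomorphic_on_imp_continuous_on by blast
    fix b assume b: "b \<in> ball (al j) r"
    have ne: "\<zeta> \<noteq> al j" using farSc[OF z] r(1) by auto
    show "(Rc b \<zeta>)^2 = (Rc (al j) \<zeta>)^2 * ((\<zeta> - b) / (\<zeta> - al j))"
      using Rc_fam_sq[OF b z] Rc_fam_sq[OF ajball z] Prel[OF ne, of b] by simp
  qed
  have R0h: "R (al j) holomorphic_on S"
    by (rule holomorphic_on_subset[OF R_hol]) (use S_cuts in blast)
  have Pholo: "Ppoly al j (al j) holomorphic_on Sc"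
    unfolding Ppoly_def[abs_def] by (intro holomorphic_intros)
  have Rcc: "continuous_on Sc (Rc (al j))"
  proof -
    have "continuous_on Sc ((\<lambda>(a, \<zeta>). Rc a \<zeta>) \<circ> (\<lambda>\<zeta>. (al j, \<zeta>)))"
      by (rule continuous_on_compose[OF _ continuous_on_subset[OF Rc_fam_cont]])
         (auto intro!: continuous_intros simp: ajball r(1))
    thus ?thesis by (simp add: o_def)
  qed
  have Rc0h: "Rc (al j) holomorphic_on Sc"
    by (rule sqrt_holo[OF Sc(1) Rcc Rc_fam_sq[OF ajball] Pholo RcnzSc])
  have zgh: "z \<notin> path_image gh" using z(1) inside_no_overlap by blast
  have zgmp: "z \<notin> path_image gmp" using z(2) outside_no_overlap by blast
  have zgmm: "z \<notin> path_image gmm" using z(3) outside_no_overlap by blast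
  have zgcp: "z \<notin> path_image gcp" using z(4) outside_no_overlap by blast
  have zgcm: "z \<notin> path_image gcm" using z(5) outside_no_overlap by blast
  have i0: "al 0 \<in> inside (path_image gcp)"
    using gc_around(1) pathstart_in_path_image[of gcp_arc] arc_ends(7) by auto
  have i1: "al 1 \<in> inside (path_image gcm)"
    using gc_around(2) pathfinish_in_path_image[of gcm_arc] arc_ends(10) by auto
  have i2: "al 2 \<in> inside (path_image gmp)"
    using gm_around(1) pathstart_in_path_image[of gmp_arc] arc_ends(3) by auto
  have i4: "al 4 \<in> inside (path_image gmp)"
    using gm_around(1) pathfinish_in_path_image[of gmp_arc] arc_ends(4) by auto
  have i5: "al 5 \<in> inside (path_image gmm)"
    using gm_around(2) pathstart_in_path_image[of gmm_arc] arc_ends(5) by auto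
  have i3: "al 3 \<in> inside (path_image gmm)"
    using gm_around(2) pathfinish_in_path_image[of gmm_arc] arc_ends(6) by auto
  have zbp: "z \<noteq> al k" if "k < 6" for k
  proof -
    have "k = 0 \<or> k = 1 \<or> k = 2 \<or> k = 3 \<or> k = 4 \<or> k = 5" using that by auto
    thus ?thesis
      using i0 i1 i2 i3 i4 i5 z inside_Int_outside by blast
  qed
  have zaj: "z \<noteq> al j" using zbp[OF j] .
  have Rz: "R (al j) z \<noteq> 0"
    using R_sq[of z] Ppoly_nz[where al=al and \<zeta>=z and j=j] zbp by fastforce
  have pnz: "complex_of_real (2 * pi) * \<i> \<noteq> 0" by simp
  have mkS: "pathctx (S \<inter> V - {z}) g R (al j) r"
    if V: "open V" and g: "valid_path g" "path_image g \<subseteq> S" "path_image g \<subseteq> V" "z \<notin> path_image g" for V g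
  proof
    show "open (S \<inter> V - {z})" using S(1) V by (intro open_Diff open_Int) auto
    show "valid_path g" by (rule g(1))
    show "path_image g \<subseteq> S \<inter> V - {z}" using g by auto
    show "R (al j) holomorphic_on S \<inter> V - {z}" by (rule holomorphic_on_subset[OF R0h]) auto
    show "0 < r" by (rule r(1))
    fix \<zeta> assume "\<zeta> \<in> S \<inter> V - {z}"
    hence zS: "\<zeta> \<in> S" by auto
    show "R (al j) \<zeta> \<noteq> 0" by (rule RnzS[OF zS])
    show "r \<le> norm (\<zeta> - al j)" by (rule farS[OF zS])
    fix a assume "a \<in> ball (al j) r"
    thus "R a \<zeta> = R (al j) \<zeta> * csqrt ((\<zeta> - a) / (\<zeta> - al j))" by (rule repS[OF _ zS])
  qed
  have mkSc: "pathctx (Sc - {z}) g Rc (al j) r"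
    if g: "valid_path g" "path_image g \<subseteq> Sc" "z \<notin> path_image g" for g
  proof
    show "open (Sc - {z})" using Sc(1) by (intro open_Diff) auto
    show "valid_path g" by (rule g(1))
    show "path_image g \<subseteq> Sc - {z}" using g by auto
    show "Rc (al j) holomorphic_on Sc - {z}" by (rule holomorphic_on_subset[OF Rc0h]) auto
    show "0 < r" by (rule r(1))
    fix \<zeta> assume "\<zeta> \<in> Sc - {z}"
    hence zS: "\<zeta> \<in> Sc" by auto
    show "Rc (al j) \<zeta> \<noteq> 0" by (rule RcnzSc[OF zS])
    show "r \<le> norm (\<zeta> - al j)" by (rule farSc[OF zS])
    fix a assume "a \<in> ball (al j) r"
    thus "Rc a \<zeta> = Rc (al j) \<zeta> * csqrt ((\<zeta> - a) / (\<zeta> - al j))" by (rule repSc[OF _ zS])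
  qed
  interpret Ph: pathctx "S \<inter> U - {z}" gh R "al j" r
    by (rule mkS[OF f_hol(1) loops(1) S(2) f_hol(3) zgh])
  interpret Pmp: pathctx "S \<inter> UNIV - {z}" gmp R "al j" r
    by (rule mkS[OF open_UNIV loops(4) S(3) _ zgmp]) simp
  interpret Pmm: pathctx "S \<inter> UNIV - {z}" gmm R "al j" r
    by (rule mkS[OF open_UNIV loops(7) S(4) _ zgmm]) simp
  interpret Pcp: pathctx "Sc - {z}" gcp Rc "al j" r
    by (rule mkSc[OF loops(10) Sc(2) zgcp])
  interpret Pcm: pathctx "Sc - {z}" gcm Rc "al j" r
    by (rule mkSc[OF loops(12) Sc(3) zgcm])
  have hf: "f holomorphic_on S \<inter> U - {z}" by (rule holomorphic_on_subset[OF f_hol(2)]) auto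
  have zT1: "z \<notin> S \<inter> UNIV - {z}" by simp
  have zT2: "z \<notin> Sc - {z}" by simp
  have zT3: "z \<notin> S \<inter> U - {z}" by simp
  have M0: "((\<lambda>a. cint2 gmp gmm (\<lambda>\<zeta>. 1 / R a \<zeta>)) has_field_derivative
      cint2 gmp gmm (\<lambda>\<zeta>. 1 / ((\<zeta> - al j) * R (al j) \<zeta>)) / 2) (at (al j))"
    unfolding cint2_def
    by (rule comb0[OF Pmp.d0[of "\<lambda>_. 1", OF holomorphic_on_const] Pmm.d0[of "\<lambda>_. 1", OF holomorphic_on_const]])
  have M1: "((\<lambda>a. cint2 gmp gmm (\<lambda>\<zeta>. \<zeta> / R a \<zeta>)) has_field_derivative
      1/2 * (cint2 gmp gmm (\<lambda>\<zeta>. 1 / R (al j) \<zeta>) + al j * cint2 gmp gmm (\<lambda>\<zeta>. 1 / ((\<zeta> - al j) * R (al j) \<zeta>)))) (at (al j))"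
    unfolding cint2_def
    by (rule comb1[OF Pmp.d1[of "\<lambda>_. 1", OF holomorphic_on_const, unfolded mult_1_right]
                      Pmm.d1[of "\<lambda>_. 1", OF holomorphic_on_const, unfolded mult_1_right]])
  have Mz: "((\<lambda>a. cint2 gmp gmm (\<lambda>\<zeta>. 1 / ((\<zeta> - z) * R a \<zeta>))) has_field_derivative
      (cint2 gmp gmm (\<lambda>\<zeta>. 1 / ((\<zeta> - z) * R (al j) \<zeta>)) - cint2 gmp gmm (\<lambda>\<zeta>. 1 / ((\<zeta> - al j) * R (al j) \<zeta>))) / (2 * (z - al j))) (at (al j))"
    unfolding cint2_def
    by (rule comb2[OF Pmp.dz[of "\<lambda>_. 1", OF holomorphic_on_const zT1 zaj] Pmm.dz[of "\<lambda>_. 1", OF holomorphic_on_const zT1 zaj]])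
  have C0: "((\<lambda>a. cint2 gcp gcm (\<lambda>\<zeta>. 1 / Rc a \<zeta>)) has_field_derivative
      cint2 gcp gcm (\<lambda>\<zeta>. 1 / ((\<zeta> - al j) * Rc (al j) \<zeta>)) / 2) (at (al j))"
    unfolding cint2_def
    by (rule comb0[OF Pcp.d0[of "\<lambda>_. 1", OF holomorphic_on_const] Pcm.d0[of "\<lambda>_. 1", OF holomorphic_on_const]])
  have C1: "((\<lambda>a. cint2 gcp gcm (\<lambda>\<zeta>. \<zeta> / Rc a \<zeta>)) has_field_derivative
      1/2 * (cint2 gcp gcm (\<lambda>\<zeta>. 1 / Rc (al j) \<zeta>) + al j * cint2 gcp gcm (\<lambda>\<zeta>. 1 / ((\<zeta> - al j) * Rc (al j) \<zeta>)))) (at (al j))"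
    unfolding cint2_def
    by (rule comb1[OF Pcp.d1[of "\<lambda>_. 1", OF holomorphic_on_const, unfolded mult_1_right]
                      Pcm.d1[of "\<lambda>_. 1", OF holomorphic_on_const, unfolded mult_1_right]])
  have Cz: "((\<lambda>a. cint2 gcp gcm (\<lambda>\<zeta>. 1 / ((\<zeta> - z) * Rc a \<zeta>))) has_field_derivative
      (cint2 gcp gcm (\<lambda>\<zeta>. 1 / ((\<zeta> - z) * Rc (al j) \<zeta>)) - cint2 gcp gcm (\<lambda>\<zeta>. 1 / ((\<zeta> - al j) * Rc (al j) \<zeta>))) / (2 * (z - al j))) (at (al j))"
    unfolding cint2_def
    by (rule comb2[OF Pcp.dz[of "\<lambda>_. 1", OF holomorphic_on_const zT2 zaj] Pcm.dz[of "\<lambda>_. 1", OF holomorphic_on_const zT2 zaj]])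
  have F0: "((\<lambda>a. contour_integral gh (\<lambda>\<zeta>. f \<zeta> / R a \<zeta>)) has_field_derivative
      contour_integral gh (\<lambda>\<zeta>. f \<zeta> / ((\<zeta> - al j) * R (al j) \<zeta>)) / 2) (at (al j))"
    by (rule half_conv[OF Ph.d0[OF hf]])
  note F1 = Ph.d1[OF hf]
  note Fz = Ph.dz[OF hf zT3 zaj]
  have DK: "((\<lambda>a. Kfun (R a) (Rc a) f gh gmp gmm gcp gcm z) has_field_derivative
      1 / (complex_of_real (2 * pi) * \<i>) *
       (det3 (cint2 gmp gmm (\<lambda>\<zeta>. 1 / ((\<zeta> - al j) * R (al j) \<zeta>)) / 2) (cint2 gmp gmm (\<lambda>\<zeta>. \<zeta> / R (al j) \<zeta>)) (cint2 gmp gmm (\<lambda>\<zeta>. 1 / ((\<zeta> - z) * R (al j) \<zeta>)))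
         (cint2 gcp gcm (\<lambda>\<zeta>. 1 / ((\<zeta> - al j) * Rc (al j) \<zeta>)) / 2) (cint2 gcp gcm (\<lambda>\<zeta>. \<zeta> / Rc (al j) \<zeta>)) (cint2 gcp gcm (\<lambda>\<zeta>. 1 / ((\<zeta> - z) * Rc (al j) \<zeta>)))
         (contour_integral gh (\<lambda>\<zeta>. f \<zeta> / ((\<zeta> - al j) * R (al j) \<zeta>)) / 2) (contour_integral gh (\<lambda>\<zeta>. \<zeta> * f \<zeta> / R (al j) \<zeta>)) (contour_integral gh (\<lambda>\<zeta>. f \<zeta> / ((\<zeta> - z) * R (al j) \<zeta>)))
      + det3 (cint2 gmp gmm (\<lambda>\<zeta>. 1 / R (al j) \<zeta>)) (1/2 * (cint2 gmp gmm (\<lambda>\<zeta>. 1 / R (al j) \<zeta>) + al j * cint2 gmp gmm (\<lambda>\<zeta>. 1 / ((\<zeta> - al j) * R (al j) \<zeta>)))) (cint2 gmp gmm (\<lambda>\<zeta>. 1 / ((\<zeta> - z) * R (al j) \<zeta>)))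
         (cint2 gcp gcm (\<lambda>\<zeta>. 1 / Rc (al j) \<zeta>)) (1/2 * (cint2 gcp gcm (\<lambda>\<zeta>. 1 / Rc (al j) \<zeta>) + al j * cint2 gcp gcm (\<lambda>\<zeta>. 1 / ((\<zeta> - al j) * Rc (al j) \<zeta>)))) (cint2 gcp gcm (\<lambda>\<zeta>. 1 / ((\<zeta> - z) * Rc (al j) \<zeta>)))
         (contour_integral gh (\<lambda>\<zeta>. f \<zeta> / R (al j) \<zeta>)) (1/2 * (contour_integral gh (\<lambda>\<zeta>. f \<zeta> / R (al j) \<zeta>) + al j * contour_integral gh (\<lambda>\<zeta>. f \<zeta> / ((\<zeta> - al j) * R (al j) \<zeta>)))) (contour_integral gh (\<lambda>\<zeta>. f \<zeta> / ((\<zeta> - z) * R (al j) \<zeta>)))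
      + det3 (cint2 gmp gmm (\<lambda>\<zeta>. 1 / R (al j) \<zeta>)) (cint2 gmp gmm (\<lambda>\<zeta>. \<zeta> / R (al j) \<zeta>)) ((cint2 gmp gmm (\<lambda>\<zeta>. 1 / ((\<zeta> - z) * R (al j) \<zeta>)) - cint2 gmp gmm (\<lambda>\<zeta>. 1 / ((\<zeta> - al j) * R (al j) \<zeta>))) / (2 * (z - al j)))
         (cint2 gcp gcm (\<lambda>\<zeta>. 1 / Rc (al j) \<zeta>)) (cint2 gcp gcm (\<lambda>\<zeta>. \<zeta> / Rc (al j) \<zeta>)) ((cint2 gcp gcm (\<lambda>\<zeta>. 1 / ((\<zeta> - z) * Rc (al j) \<zeta>)) - cint2 gcp gcm (\<lambda>\<zeta>. 1 / ((\<zeta> - al j) * Rc (al j) \<zeta>))) / (2 * (z - al j)))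
         (contour_integral gh (\<lambda>\<zeta>. f \<zeta> / R (al j) \<zeta>)) (contour_integral gh (\<lambda>\<zeta>. \<zeta> * f \<zeta> / R (al j) \<zeta>)) ((contour_integral gh (\<lambda>\<zeta>. f \<zeta> / ((\<zeta> - z) * R (al j) \<zeta>)) - contour_integral gh (\<lambda>\<zeta>. f \<zeta> / ((\<zeta> - al j) * R (al j) \<zeta>))) / (2 * (z - al j))))) (at (al j))"
    unfolding Kfun_def by (rule DERIV_cmult[OF det3_deriv[OF M0 M1 Mz C0 C1 Cz F0 F1 Fz]])
  have DD: "((\<lambda>a. Dfun (R a) (Rc a) gmp gmm gcp gcm) has_field_derivative
      cint2 gmp gmm (\<lambda>\<zeta>. 1 / ((\<zeta> - al j) * R (al j) \<zeta>)) / 2 * cint2 gcp gcm (\<lambda>\<zeta>. \<zeta> / Rc (al j) \<zeta>)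
      + cint2 gmp gmm (\<lambda>\<zeta>. 1 / R (al j) \<zeta>) * (1/2 * (cint2 gcp gcm (\<lambda>\<zeta>. 1 / Rc (al j) \<zeta>) + al j * cint2 gcp gcm (\<lambda>\<zeta>. 1 / ((\<zeta> - al j) * Rc (al j) \<zeta>))))
      - (1/2 * (cint2 gmp gmm (\<lambda>\<zeta>. 1 / R (al j) \<zeta>) + al j * cint2 gmp gmm (\<lambda>\<zeta>. 1 / ((\<zeta> - al j) * R (al j) \<zeta>))) * cint2 gcp gcm (\<lambda>\<zeta>. 1 / Rc (al j) \<zeta>)
         + cint2 gmp gmm (\<lambda>\<zeta>. \<zeta> / R (al j) \<zeta>) * (cint2 gcp gcm (\<lambda>\<zeta>. 1 / ((\<zeta> - al j) * Rc (al j) \<zeta>)) / 2))) (at (al j))"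
    unfolding Dfun_def by (rule det2_deriv[OF M0 C1 M1 C0])
  have det0: "det3 (cint2 gmp gmm (\<lambda>\<zeta>. 1 / R (al j) \<zeta>)) (cint2 gmp gmm (\<lambda>\<zeta>. \<zeta> / R (al j) \<zeta>)) (cint2 gmp gmm (\<lambda>\<zeta>. 1 / ((\<zeta> - al j) * R (al j) \<zeta>)))
         (cint2 gcp gcm (\<lambda>\<zeta>. 1 / Rc (al j) \<zeta>)) (cint2 gcp gcm (\<lambda>\<zeta>. \<zeta> / Rc (al j) \<zeta>)) (cint2 gcp gcm (\<lambda>\<zeta>. 1 / ((\<zeta> - al j) * Rc (al j) \<zeta>)))
         (contour_integral gh (\<lambda>\<zeta>. f \<zeta> / R (al j) \<zeta>)) (contour_integral gh (\<lambda>\<zeta>. \<zeta> * f \<zeta> / R (al j) \<zeta>)) (contour_integral gh (\<lambda>\<zeta>. f \<zeta> / ((\<zeta> - al j) * R (al j) \<zeta>))) = 0"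
    using modulation pnz unfolding Kfun_def mult_eq_0_iff by simp
  have k0: "(0::nat) \<in> {0, 1}" by simp
  have k1: "(1::nat) \<in> {0, 1}" by simp
  note W0 = W\<Omega>[OF k0, unfolded power_0 mult_1_left]
  note W1 = W\<Omega>[OF k1, unfolded power_one_right]
  have Dnz: "cint2 gmp gmm (\<lambda>\<zeta>. 1 / R (al j) \<zeta>) * cint2 gcp gcm (\<lambda>\<zeta>. \<zeta> / Rc (al j) \<zeta>)
      - cint2 gmp gmm (\<lambda>\<zeta>. \<zeta> / R (al j) \<zeta>) * cint2 gcp gcm (\<lambda>\<zeta>. 1 / Rc (al j) \<zeta>) \<noteq> 0"
    using D_nz unfolding Dfun_def .
  have scal: "contour_integral g (\<lambda>\<zeta>. c / Q \<zeta>) = c * contour_integral g (\<lambda>\<zeta>. 1 / Q \<zeta>)"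
    if "(\<lambda>\<zeta>. 1 / Q \<zeta>) contour_integrable_on g" for g c and Q :: "complex \<Rightarrow> complex"
  proof -
    have "(\<lambda>\<zeta>. c / Q \<zeta>) = (\<lambda>\<zeta>. c * (1 / Q \<zeta>))" by simp
    thus ?thesis using contour_integral_lmul[OF that, of c] by simp
  qed
  have intm: "(\<lambda>\<zeta>. 1 / ((\<zeta> - z) * R (al j) \<zeta>)) holomorphic_on S \<inter> UNIV - {z}"
    using RnzS by (intro holomorphic_intros holomorphic_on_subset[OF R0h]) auto
  have intc: "(\<lambda>\<zeta>. 1 / ((\<zeta> - z) * Rc (al j) \<zeta>)) holomorphic_on Sc - {z}"
    using RcnzSc by (intro holomorphic_intros holomorphic_on_subset[OF Rc0h]) auto
  have hW: "cint2 gmp gmm (\<lambda>\<zeta>. W / ((\<zeta> - z) * R (al j) \<zeta>)) = W * cint2 gmp gmm (\<lambda>\<zeta>. 1 / ((\<zeta> - z) * R (al j) \<zeta>))"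
    unfolding cint2_def scal[where c=W, OF Pmp.integ[OF intm]] scal[where c=W, OF Pmm.integ[OF intm]] by (simp add: distrib_left)
  have hO: "cint2 gcp gcm (\<lambda>\<zeta>. \<Omega> / ((\<zeta> - z) * Rc (al j) \<zeta>)) = \<Omega> * cint2 gcp gcm (\<lambda>\<zeta>. 1 / ((\<zeta> - z) * Rc (al j) \<zeta>))"
    unfolding cint2_def scal[where c=\<Omega>, OF Pcp.integ[OF intc]] scal[where c=\<Omega>, OF Pcm.integ[OF intc]] by (simp add: distrib_left)
  have hh: "hfun (R (al j)) (Rc (al j)) f gh gmp gmm gcp gcm W \<Omega> z
     = R (al j) z / (complex_of_real (2 * pi) * \<i>) * (contour_integral gh (\<lambda>\<zeta>. f \<zeta> / ((\<zeta> - z) * R (al j) \<zeta>))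
        + W * cint2 gmp gmm (\<lambda>\<zeta>. 1 / ((\<zeta> - z) * R (al j) \<zeta>)) + \<Omega> * cint2 gcp gcm (\<lambda>\<zeta>. 1 / ((\<zeta> - z) * Rc (al j) \<zeta>)))"
    unfolding hfun_def hW hO ..
  show ?thesis
  proof (intro conjI)
    show "(\<lambda>a. Kfun (R a) (Rc a) f gh gmp gmm gcp gcm z) field_differentiable at (al j)"
      using DK field_differentiable_def by blast
    show "(\<lambda>a. Dfun (R a) (Rc a) gmp gmm gcp gcm) field_differentiable at (al j)"
      using DD field_differentiable_def by blast
    show "deriv (\<lambda>a. Kfun (R a) (Rc a) f gh gmp gmm gcp gcm z) (al j) =
      hfun (R (al j)) (Rc (al j)) f gh gmp gmm gcp gcm W \<Omega> z / R (al j) z *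
      (Dfun (R (al j)) (Rc (al j)) gmp gmm gcp gcm / (2 * (z - al j)) +
       deriv (\<lambda>a. Dfun (R a) (Rc a) gmp gmm gcp gcm) (al j))"
      unfolding DERIV_imp_deriv[OF DK] DERIV_imp_deriv[OF DD] unfolding hh Dfun_def
      by (rule alg[OF det0 Dnz W0 W1 zaj Rz pnz])
  qed
qed

end
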